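(* Let $G=(V,E,\mathcal F)$ be a map on a closed orientable surface with a reference orientation, and let $a,b\in E$ be two edges. Then \[ (\eta_a)_b=\begin{cases}(\pi_b)_{h(a)}-(\pi_b)_{t(a)}+(\pi^*_b)_{r(a)}-(\pi^*_b)_{l(a)}+1, & \text{if } a=b,\\ (\pi_b)_{h(a)}-(\pi_b)_{t(a)}+(\pi^*_b)_{r(a)}-(\pi^*_b)_{l(a)}, & \text{otherwise.}\end{cases} \]
   Context: A map is a finite graph embedded in the surface so that every face is an open disc; each edge $e$ has tail $t(e)$, head $h(e)$, right shore $r(e)\in\mathcal F$ and left shore $l(e)\in\mathcal F$. For $v\in V$, $\delta v\in\mathbb R^E$ has entries $1$ on edges with head $v$, $-1$ on edges with tail $v$, $0$ otherwise; for $F\in\mathcal F$, $\partial F\in\mathbb R^E$ has entries $1$ on edges with $r(e)=F$, $-1$ on edges with $l(e)=F$, $0$ otherwise. $\mathcal C$ is the space of smooth circulations: vectors $\phi\in\mathbb R^E$ with $\phi\cdot\delta v=0$ for all $v$ and $\phi\cdot\partial F=0$ for all $F$. For $e\in E$, $\chi_e$ is the unit vector of $e$ and $\eta_e$ is the orthogonal projection of $\chi_e$ onto $\mathcal C$. Harmonic functions: for a connected graph $H$ with node set $W$ and nodes $a,b\in W$, $\pi_{a,b}\in\mathbb R^W$ is the unique vector with $\sum_{u}\pi_u=0$ and, for every node $v$, $\sum_{u:\,uv\in E(H)}\pi_u-d_v\pi_v$ equal to $1$ if $v=b$, $-1$ if $v=a$, and $0$ otherwise (neighbors counted with edge multiplicity,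 $d_v$ the degree). For an edge $e$ of $G$, $\pi_e=\pi_{t(e),h(e)}$ computed in $G$. The dual map $G^*$ has node set $\mathcal F$ and edge set $E$, where edge $e$ joins $l(e)$ (its tail) to $r(e)$ (its head); $\pi^*_e=\pi_{l(e),r(e)}$ computed in $G^*$. *)

theory Defs
  imports Main "HOL.Real"
begin

text \<open>Maps on closed orientable surfaces, encoded combinatorially by rotation systems.
  Edges form a finite set E; each edge e carries two darts (e,True) (oriented along the
  reference orientation, from tail to head) and (e,False) (its reversal).
  A permutation sigma of the darts gives the cyclic (counterclockwise) order of darts
  around their common origin.\<close>

definition darts :: "'e set \<Rightarrow> ('e \<times> bool) set" where
  "darts E = E \<times> (UNIV :: bool set)"

definition alpha :: "'e \<times> bool \<Rightarrow> 'e \<times> bool" where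
  "alpha d = (fst d, \<not> snd d)"

definition orb :: "('a \<Rightarrow> 'a) \<Rightarrow> 'a \<Rightarrow> 'a set" where
  "orb f d = range (\<lambda>n. (f ^^ n) d)"

definition facep :: "('e \<times> bool \<Rightarrow> 'e \<times> bool) \<Rightarrow> 'e \<times> bool \<Rightarrow> 'e \<times> bool" where
  "facep \<sigma> = \<sigma> \<circ> alpha"

definition is_map :: "'e set \<Rightarrow> ('e \<times> bool \<Rightarrow> 'e \<times> bool) \<Rightarrow> bool" where
  "is_map E \<sigma> \<longleftrightarrow> finite E \<and> bij_betw \<sigma> (darts E) (darts E) \<and>
     (\<forall>d\<in>darts E. \<forall>d'\<in>darts E.
        (d, d') \<in> ({(x, \<sigma> x) | x. True} \<union> {(x, alpha x) | x. True})\<^sup>*)"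

definition tailv :: "('e \<times> bool \<Rightarrow> 'e \<times> bool) \<Rightarrow> 'e \<Rightarrow> ('e \<times> bool) set" where
  "tailv \<sigma> e = orb \<sigma> (e, True)"

definition headv :: "('e \<times> bool \<Rightarrow> 'e \<times> bool) \<Rightarrow> 'e \<Rightarrow> ('e \<times> bool) set" where
  "headv \<sigma> e = orb \<sigma> (e, False)"

definition rshore :: "('e \<times> bool \<Rightarrow> 'e \<times> bool) \<Rightarrow> 'e \<Rightarrow> ('e \<times> bool) set" where
  "rshore \<sigma> e = orb (facep \<sigma>) (e, True)"

definition lshore :: "('e \<times> bool \<Rightarrow> 'e \<times> bool) \<Rightarrow> 'e \<Rightarrow> ('e \<times> bool) set" where
  "lshore \<sigma> e = orb (facep \<sigma>) (e, False)"

definition verts :: "'e set \<Rightarrow> ('e \<times> bool \<Rightarrow> 'e \<times> bool) \<Rightarrow> ('e \<times> bool) set set" where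
  "verts E \<sigma> = orb \<sigma> ` darts E"

definition faces :: "'e set \<Rightarrow> ('e \<times> bool \<Rightarrow> 'e \<times> bool) \<Rightarrow> ('e \<times> bool) set set" where
  "faces E \<sigma> = orb (facep \<sigma>) ` darts E"

text \<open>Vectors in R^E are functions 'e => real vanishing outside E.\<close>

definition ip :: "'e set \<Rightarrow> ('e \<Rightarrow> real) \<Rightarrow> ('e \<Rightarrow> real) \<Rightarrow> real" where
  "ip E x y = (\<Sum>e\<in>E. x e * y e)"

definition deltav :: "'e set \<Rightarrow> ('e \<times> bool \<Rightarrow> 'e \<times> bool) \<Rightarrow> ('e \<times> bool) set \<Rightarrow> 'e \<Rightarrow> real" where
  "deltav E \<sigma> v = (\<lambda>e. if e \<in> E then (if headv \<sigma> e = v then 1 else 0) - (if tailv \<sigma> e = v then 1 else 0) else 0)"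

definition bdry :: "'e set \<Rightarrow> ('e \<times> bool \<Rightarrow> 'e \<times> bool) \<Rightarrow> ('e \<times> bool) set \<Rightarrow> 'e \<Rightarrow> real" where
  "bdry E \<sigma> F = (\<lambda>e. if e \<in> E then (if rshore \<sigma> e = F then 1 else 0) - (if lshore \<sigma> e = F then 1 else 0) else 0)"

definition circs :: "'e set \<Rightarrow> ('e \<times> bool \<Rightarrow> 'e \<times> bool) \<Rightarrow> ('e \<Rightarrow> real) set" where
  "circs E \<sigma> = {x. (\<forall>e. e \<notin> E \<longrightarrow> x e = 0) \<and>
      (\<forall>v\<in>verts E \<sigma>. ip E x (deltav E \<sigma> v) = 0) \<and>
      (\<forall>F\<in>faces E \<sigma>. ip E x (bdry E \<sigma> F) = 0)}"

definition chi :: "'e \<Rightarrow> 'e \<Rightarrow> real" where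
  "chi a = (\<lambda>e. if e = a then 1 else 0)"

definition eta :: "'e set \<Rightarrow> ('e \<times> bool \<Rightarrow> 'e \<times> bool) \<Rightarrow> 'e \<Rightarrow> 'e \<Rightarrow> real" where
  "eta E \<sigma> a = (THE x. x \<in> circs E \<sigma> \<and> (\<forall>y\<in>circs E \<sigma>. ip E (\<lambda>e. chi a e - x e) y = 0))"

definition harm :: "'w set \<Rightarrow> 'e set \<Rightarrow> ('e \<Rightarrow> 'w) \<Rightarrow> ('e \<Rightarrow> 'w) \<Rightarrow> 'w \<Rightarrow> 'w \<Rightarrow> 'w \<Rightarrow> real" where
  "harm W Es en1 en2 a b = (THE p. (\<forall>u. u \<notin> W \<longrightarrow> p u = 0) \<and> (\<Sum>u\<in>W. p u) = 0 \<and>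
     (\<forall>v\<in>W. (\<Sum>e\<in>{e\<in>Es. en1 e = v}. p (en2 e)) + (\<Sum>e\<in>{e\<in>Es. en2 e = v}. p (en1 e))
            - real (card {e\<in>Es. en1 e = v} + card {e\<in>Es. en2 e = v}) * p v
          = (if v = b then 1 else 0) - (if v = a then 1 else 0)))"

definition pie :: "'e set \<Rightarrow> ('e \<times> bool \<Rightarrow> 'e \<times> bool) \<Rightarrow> 'e \<Rightarrow> ('e \<times> bool) set \<Rightarrow> real" where
  "pie E \<sigma> e = harm (verts E \<sigma>) E (tailv \<sigma>) (headv \<sigma>) (tailv \<sigma> e) (headv \<sigma> e)"

definition piestar :: "'e set \<Rightarrow> ('e \<times> bool \<Rightarrow> 'e \<times> bool) \<Rightarrow> 'e \<Rightarrow> ('e \<times> bool) set \<Rightarrow> real" where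
  "piestar E \<sigma> e = harm (faces E \<sigma>) E (lshore \<sigma>) (rshore \<sigma>) (lshore \<sigma> e) (rshore \<sigma> e)"

end

theory Submission
  imports Defs "Jordan_Normal_Form.Determinant"
begin

lemma lin_solve:
  fixes K :: "'w \<Rightarrow> 'w \<Rightarrow> real" and c :: "'w \<Rightarrow> real"
  assumes fin: "finite W"
    and inj: "\<And>p. \<forall>u\<in>W. (\<Sum>v\<in>W. K u v * p v) = 0 \<Longrightarrow> \<forall>u\<in>W. p u = 0"
  shows "\<exists>p. \<forall>u\<in>W. (\<Sum>v\<in>W. K u v * p v) = c u"
proof -
  obtain xs where xs: "set xs = W" "distinct xs" using finite_distinct_list[OF fin] by blast
  define n where "n = length xs"
  define M :: "real mat" where "M = mat n n (\<lambda>(i,j). K (xs!i) (xs!j))"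
  have Mc: "M \<in> carrier_mat n n" by (simp add: M_def)
  have bij: "bij_betw (nth xs) {..<n} W" using bij_betw_nth[OF xs(2)] xs(1) n_def by auto
  define ix where "ix = the_inv_into {..<n} (nth xs)"
  have ix1: "\<And>i. i < n \<Longrightarrow> ix (xs!i) = i"
    unfolding ix_def using bij by (simp add: bij_betw_def the_inv_into_f_f)
  have ix2: "\<And>u. u \<in> W \<Longrightarrow> ix u < n \<and> xs ! (ix u) = u"
    unfolding ix_def using bij
    by (metis bij_betw_def bij_betw_the_inv_into f_the_inv_into_f lessThan_iff bij_betw_apply)
  have reidx: "\<And>g. (\<Sum>v\<in>W. g v) = (\<Sum>j<n. g (xs!j))"
    using sum.reindex_bij_betw[OF bij] by metis
  have Mv: "\<And>v i. v \<in> carrier_vec n \<Longrightarrow> i < n \<Longrightarrow> (M *\<^sub>v v) $ i = (\<Sum>j<n. K (xs!i) (xs!j) * v $ j)"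
    by (simp add: M_def scalar_prod_def atLeast0LessThan)
  have "det M \<noteq> 0"
  proof
    assume "det M = 0"
    then obtain v where v: "v \<in> carrier_vec n" "v \<noteq> 0\<^sub>v n" "M *\<^sub>v v = 0\<^sub>v n"
      using det_0_iff_vec_prod_zero_field[OF Mc] by auto
    define p where "p u = v $ (ix u)" for u
    have "\<forall>u\<in>W. (\<Sum>w\<in>W. K u w * p w) = 0"
    proof
      fix u assume u: "u \<in> W"
      have "(\<Sum>w\<in>W. K u w * p w) = (\<Sum>j<n. K (xs!(ix u)) (xs!j) * v $ j)"
        unfolding reidx p_def using ix1 ix2[OF u] by simp
      also have "\<dots> = (M *\<^sub>v v) $ (ix u)" using Mv[OF v(1)] ix2[OF u] by simp
      also have "\<dots> = 0" using v(3) ix2[OF u] by simp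
      finally show "(\<Sum>w\<in>W. K u w * p w) = 0" .
    qed
    hence p0: "\<forall>u\<in>W. p u = 0" by (rule inj)
    have "v = 0\<^sub>v n"
    proof (rule eq_vecI)
      fix j assume "j < dim_vec (0\<^sub>v n :: real vec)"
      hence j: "j < n" by simp
      have "xs ! j \<in> W" using j xs(1) n_def by auto
      hence "p (xs!j) = 0" using p0 by auto
      thus "v $ j = 0\<^sub>v n $ j" using j ix1 p_def by simp
    qed (use v in auto)
    thus False using v(2) by simp
  qed
  from det_non_zero_imp_unit[OF Mc this, of "()"]
  obtain Q where Q: "Q \<in> carrier_mat n n" "M * Q = 1\<^sub>m n"
    unfolding Units_def ring_mat_def by auto
  define cv where "cv = vec n (\<lambda>i. c (xs!i))"
  define x where "x = Q *\<^sub>v cv"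
  have cvc: "cv \<in> carrier_vec n" by (simp add: cv_def)
  have Mx: "M *\<^sub>v x = cv" unfolding x_def
    using assoc_mult_mat_vec[OF Mc Q(1) cvc] Q(2) cvc by simp
  have xc: "x \<in> carrier_vec n" using Q(1) cvc x_def by simp
  show ?thesis
  proof (intro exI ballI)
    fix u assume u: "u \<in> W"
    have "(\<Sum>w\<in>W. K u w * x $ (ix w)) = (\<Sum>j<n. K (xs!(ix u)) (xs!j) * x $ j)"
      unfolding reidx using ix1 ix2[OF u] by simp
    also have "\<dots> = (M *\<^sub>v x) $ (ix u)" using Mv[OF xc] ix2[OF u] by simp
    also have "\<dots> = c u" using Mx ix2[OF u] cv_def by simp
    finally show "(\<Sum>w\<in>W. K u w * x $ (ix w)) = c u" .
  qed
qed

definition lap :: "'e set \<Rightarrow> ('e \<Rightarrow> 'w) \<Rightarrow> ('e \<Rightarrow> 'w) \<Rightarrow> ('w \<Rightarrow> real) \<Rightarrow> 'w \<Rightarrow> real" where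
  "lap Es en1 en2 p v = (\<Sum>e\<in>Es. ((if en1 e = v then 1 else 0) - (if en2 e = v then 1 else 0)) * (p (en2 e) - p (en1 e)))"

lemma harm_lhs_eq:
  assumes "finite Es"
  shows "(\<Sum>e\<in>{e\<in>Es. en1 e = v}. p (en2 e)) + (\<Sum>e\<in>{e\<in>Es. en2 e = v}. p (en1 e))
            - real (card {e\<in>Es. en1 e = v} + card {e\<in>Es. en2 e = v}) * p v = lap Es en1 en2 p v"
proof -
  have 1: "(\<Sum>e\<in>{e\<in>Es. en1 e = v}. p (en2 e)) = (\<Sum>e\<in>Es. if en1 e = v then p (en2 e) else 0)"
    using assms by (simp add: sum.inter_filter)
  have 2: "(\<Sum>e\<in>{e\<in>Es. en2 e = v}. p (en1 e)) = (\<Sum>e\<in>Es. if en2 e = v then p (en1 e) else 0)"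
    using assms by (simp add: sum.inter_filter)
  have 3: "real (card {e\<in>Es. en1 e = v}) = (\<Sum>e\<in>Es. if en1 e = v then 1 else 0)"
    using assms by (simp add: sum.inter_filter[symmetric])
  have 4: "real (card {e\<in>Es. en2 e = v}) = (\<Sum>e\<in>Es. if en2 e = v then 1 else 0)"
    using assms by (simp add: sum.inter_filter[symmetric])
  have "lap Es en1 en2 p v = (\<Sum>e\<in>Es. ((if en1 e = v then p (en2 e) else 0) + (if en2 e = v then p (en1 e) else 0))
      - ((if en1 e = v then 1 else 0) + (if en2 e = v then 1 else 0)) * p v)"
    unfolding lap_def by (rule sum.cong) (auto simp: algebra_simps)
  also have "\<dots> = (\<Sum>e\<in>Es. if en1 e = v then p (en2 e) else 0) + (\<Sum>e\<in>Es. if en2 e = v then p (en1 e) else 0)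
      - ((\<Sum>e\<in>Es. if en1 e = v then 1 else 0) + (\<Sum>e\<in>Es. if en2 e = v then 1 else 0)) * p v"
    by (simp add: sum_subtractf sum.distrib sum_distrib_right[symmetric])
  finally show ?thesis using 1 2 3 4 by simp
qed

lemma sum_ind:
  fixes f :: "'w \<Rightarrow> real"
  assumes "finite W" "x \<in> W" "y \<in> W"
  shows "(\<Sum>v\<in>W. f v * ((if x = v then 1 else 0) - (if y = v then 1 else 0))) = f x - f y"
proof -
  have "(\<Sum>v\<in>W. f v * ((if x = v then 1 else 0) - (if y = v then 1 else 0)))
     = (\<Sum>v\<in>W. (if x = v then f v else 0)) - (\<Sum>v\<in>W. (if y = v then f v else 0))"
  proof -
    have "\<And>v. f v * ((if x = v then 1 else 0) - (if y = v then 1 else 0)) = (if x = v then f v else 0) - (if y = v then f v else 0)"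
      by auto
    thus ?thesis by (simp add: sum_subtractf)
  qed
  also have "\<dots> = f x - f y" using assms by (simp add: sum.delta)
  finally show ?thesis .
qed

lemma sum_ind0:
  assumes "finite W" "x \<in> W" "y \<in> W"
  shows "(\<Sum>v\<in>W. ((if x = v then 1 else 0) - (if y = v then 1 else (0::real)))) = 0"
  using assms by (simp add: sum_subtractf sum.delta)

definition endsin :: "'w set \<Rightarrow> 'e set \<Rightarrow> ('e \<Rightarrow> 'w) \<Rightarrow> ('e \<Rightarrow> 'w) \<Rightarrow> bool" where
  "endsin W Es en1 en2 \<longleftrightarrow> (\<forall>e\<in>Es. en1 e \<in> W \<and> en2 e \<in> W)"

lemma lap_energy:
  assumes "finite W" "finite Es" "endsin W Es en1 en2"
  shows "(\<Sum>v\<in>W. p v * lap Es en1 en2 p v) = - (\<Sum>e\<in>Es. (p (en2 e) - p (en1 e))^2)"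
proof -
  have "(\<Sum>v\<in>W. p v * lap Es en1 en2 p v)
     = (\<Sum>e\<in>Es. (\<Sum>v\<in>W. p v * ((if en1 e = v then 1 else 0) - (if en2 e = v then 1 else 0))) * (p (en2 e) - p (en1 e)))"
    unfolding lap_def sum_distrib_left sum_distrib_right
    by (subst sum.swap) (simp add: mult.assoc)
  also have "\<dots> = (\<Sum>e\<in>Es. (p (en1 e) - p (en2 e)) * (p (en2 e) - p (en1 e)))"
    using assms(3) unfolding endsin_def by (intro sum.cong refl) (simp add: sum_ind assms(1))
  also have "\<dots> = - (\<Sum>e\<in>Es. (p (en2 e) - p (en1 e))^2)"
    by (simp add: sum_negf[symmetric] power2_eq_square algebra_simps)
  finally show ?thesis .
qed

lemma lap_sum:
  assumes "finite W" "endsin W Es en1 en2"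
  shows "(\<Sum>v\<in>W. lap Es en1 en2 p v) = 0"
proof -
  have "(\<Sum>v\<in>W. lap Es en1 en2 p v)
     = (\<Sum>e\<in>Es. (\<Sum>v\<in>W. ((if en1 e = v then 1 else 0) - (if en2 e = v then 1 else 0))) * (p (en2 e) - p (en1 e)))"
    unfolding lap_def sum_distrib_right
    by (subst sum.swap) simp
  also have "\<dots> = 0"
    using assms(2) unfolding endsin_def by (intro sum.neutral ballI) (simp add: sum_ind0[OF assms(1)])
  finally show ?thesis .
qed

lemma lap_kernel:
  assumes "finite W" "endsin W Es en1 en2"
  shows "lap Es en1 en2 p u = (\<Sum>v\<in>W. (\<Sum>e\<in>Es. ((if en1 e = u then 1 else 0) - (if en2 e = u then 1 else 0))
      * ((if en2 e = v then 1 else 0) - (if en1 e = v then 1 else 0))) * p v)"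
proof -
  have "lap Es en1 en2 p u = (\<Sum>e\<in>Es. ((if en1 e = u then 1 else 0) - (if en2 e = u then 1 else 0))
      * (\<Sum>v\<in>W. p v * ((if en2 e = v then 1 else 0) - (if en1 e = v then 1 else 0))))"
    unfolding lap_def using assms(2) unfolding endsin_def
    by (intro sum.cong refl) (simp add: sum_ind assms(1))
  also have "\<dots> = (\<Sum>v\<in>W. (\<Sum>e\<in>Es. ((if en1 e = u then 1 else 0) - (if en2 e = u then 1 else 0))
      * ((if en2 e = v then 1 else 0) - (if en1 e = v then 1 else 0))) * p v)"
    unfolding sum_distrib_left sum_distrib_right
    by (subst sum.swap) (simp add: algebra_simps)
  finally show ?thesis .
qed

lemma lap_cong:
  assumes "endsin W Es en1 en2" "\<And>x. x \<in> W \<Longrightarrow> p x = q x"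
  shows "lap Es en1 en2 p v = lap Es en1 en2 q v"
  unfolding lap_def using assms unfolding endsin_def by (intro sum.cong refl) auto

lemma lap_diff:
  "lap Es en1 en2 (\<lambda>x. p x - q x) v = lap Es en1 en2 p v - lap Es en1 en2 q v"
  unfolding lap_def by (simp add: sum_subtractf[symmetric] algebra_simps)

definition gconn :: "'w set \<Rightarrow> 'e set \<Rightarrow> ('e \<Rightarrow> 'w) \<Rightarrow> ('e \<Rightarrow> 'w) \<Rightarrow> bool" where
  "gconn W Es en1 en2 \<longleftrightarrow> (\<forall>u\<in>W. \<forall>v\<in>W.
     (u, v) \<in> ({(en1 e, en2 e) | e. e \<in> Es} \<union> {(en2 e, en1 e) | e. e \<in> Es})\<^sup>*)"

lemma conn_const:
  assumes "(u, v) \<in> ({(en1 e, en2 e) | e. e \<in> Es} \<union> {(en2 e, en1 e) | e. e \<in> Es})\<^sup>*"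
    and "\<forall>e\<in>Es. d (en1 e) = d (en2 e)"
  shows "d u = d v"
  using assms(1)
proof (induction rule: rtrancl_induct)
  case base then show ?case by simp
next
  case (step y z)
  from step(2) obtain e where "e \<in> Es" "(y = en1 e \<and> z = en2 e) \<or> (y = en2 e \<and> z = en1 e)" by blast
  then show ?case using step(3) assms(2) by auto
qed

lemma lap_zero_const:
  assumes "finite W" "finite Es" "endsin W Es en1 en2" "gconn W Es en1 en2"
    and "\<forall>v\<in>W. lap Es en1 en2 p v = 0" "u \<in> W" "v \<in> W"
  shows "p u = p v"
proof -
  have "(\<Sum>e\<in>Es. (p (en2 e) - p (en1 e))^2) = 0"
    using lap_energy[OF assms(1-3), of p] assms(5) by simp
  hence "\<forall>e\<in>Es. (p (en2 e) - p (en1 e))^2 = 0"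
    using assms(2) by (subst (asm) sum_nonneg_eq_0_iff) auto
  hence "\<forall>e\<in>Es. p (en1 e) = p (en2 e)" by simp
  moreover have "(u, v) \<in> ({(en1 e, en2 e) | e. e \<in> Es} \<union> {(en2 e, en1 e) | e. e \<in> Es})\<^sup>*"
    using assms(4,6,7) unfolding gconn_def by blast
  ultimately show ?thesis using conn_const[of u v en1 en2 Es p] by blast
qed

definition harmP where
  "harmP W Es en1 en2 a b p \<longleftrightarrow> (\<forall>u. u \<notin> W \<longrightarrow> p u = 0) \<and> (\<Sum>u\<in>W. p u) = 0 \<and>
     (\<forall>v\<in>W. lap Es en1 en2 p v = (if v = b then 1 else 0) - (if v = a then 1 else 0))"

lemma harm_spec:
  assumes fW: "finite W" and fE: "finite Es" and en: "endsin W Es en1 en2" and gc: "gconn W Es en1 en2"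
    and aW: "a \<in> W" and bW: "b \<in> W"
  shows "harmP W Es en1 en2 a b (harm W Es en1 en2 a b)"
proof -
  have eq: "harm W Es en1 en2 a b = (THE p. harmP W Es en1 en2 a b p)"
    unfolding harm_def harmP_def by (simp only: harm_lhs_eq[OF fE])
  have cardpos: "real (card W) \<noteq> 0" using fW aW by auto
  define c where "c u = (if u = b then 1 else 0) - (if u = a then (1::real) else 0)" for u
  have csum: "(\<Sum>u\<in>W. c u) = 0"
    unfolding c_def using fW aW bW by (simp add: sum_subtractf sum.delta')
  define K where "K u v = (\<Sum>e\<in>Es. ((if en1 e = u then 1 else 0) - (if en2 e = u then 1 else 0))
      * ((if en2 e = v then 1 else 0) - (if en1 e = v then 1 else 0))) + (1::real)" for u v
  have Kp: "(\<Sum>v\<in>W. K u v * p v) = lap Es en1 en2 p u + (\<Sum>v\<in>W. p v)" for u p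
  proof -
    have "(\<Sum>v\<in>W. K u v * p v) = (\<Sum>v\<in>W. (K u v - 1) * p v + p v)"
      by (rule sum.cong) (simp_all add: algebra_simps)
    also have "\<dots> = (\<Sum>v\<in>W. (K u v - 1) * p v) + (\<Sum>v\<in>W. p v)"
      by (rule sum.distrib)
    also have "(\<Sum>v\<in>W. (K u v - 1) * p v) = lap Es en1 en2 p u"
      unfolding lap_kernel[OF fW en] K_def by simp
    finally show ?thesis .
  qed
  have "\<exists>p. \<forall>u\<in>W. (\<Sum>v\<in>W. K u v * p v) = c u"
  proof (rule lin_solve[OF fW])
    fix p assume h: "\<forall>u\<in>W. (\<Sum>v\<in>W. K u v * p v) = 0"
    have "(\<Sum>u\<in>W. lap Es en1 en2 p u + (\<Sum>v\<in>W. p v)) = 0" using h Kp by simp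
    hence "real (card W) * (\<Sum>v\<in>W. p v) = 0" using lap_sum[OF fW en, of p] by (simp add: sum.distrib)
    hence S: "(\<Sum>v\<in>W. p v) = 0" using cardpos by simp
    hence L: "\<forall>u\<in>W. lap Es en1 en2 p u = 0" using h Kp by simp
    have pa: "\<forall>u\<in>W. p u = p a" using lap_zero_const[OF fW fE en gc L] aW by blast
    have "(\<Sum>v\<in>W. p v) = (\<Sum>v\<in>W. p a)" using pa by (intro sum.cong refl) blast
    hence "(\<Sum>v\<in>W. p v) = real (card W) * p a" by simp
    hence pa0: "p a = 0" using S cardpos by simp
    show "\<forall>u\<in>W. p u = 0"
    proof
      fix u assume "u \<in> W"
      hence "p u = p a" using pa by blast
      thus "p u = 0" using pa0 by simp
    qed
  qed
  then obtain p where p: "\<forall>u\<in>W. lap Es en1 en2 p u + (\<Sum>v\<in>W. p v) = c u" using Kp by auto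
  have "(\<Sum>u\<in>W. lap Es en1 en2 p u + (\<Sum>v\<in>W. p v)) = 0" using p csum by simp
  hence "real (card W) * (\<Sum>v\<in>W. p v) = 0" using lap_sum[OF fW en, of p] by (simp add: sum.distrib)
  hence S: "(\<Sum>v\<in>W. p v) = 0" using cardpos by simp
  define p' where "p' u = (if u \<in> W then p u else 0)" for u
  have ex: "harmP W Es en1 en2 a b p'"
    unfolding harmP_def
  proof (intro conjI ballI allI impI)
    show "\<And>u. u \<notin> W \<Longrightarrow> p' u = 0" by (simp add: p'_def)
    show "(\<Sum>u\<in>W. p' u) = 0" using S by (simp add: p'_def)
    fix v assume v: "v \<in> W"
    have "lap Es en1 en2 p' v = lap Es en1 en2 p v" by (rule lap_cong[OF en]) (simp add: p'_def)
    thus "lap Es en1 en2 p' v = (if v = b then 1 else 0) - (if v = a then 1 else 0)"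
      using p v S c_def by simp
  qed
  have un: "q = p'" if q: "harmP W Es en1 en2 a b q" for q
  proof -
    define d where "d x = q x - p' x" for x
    have L: "\<forall>v\<in>W. lap Es en1 en2 d v = 0"
      using q ex unfolding harmP_def d_def by (simp add: lap_diff)
    have da: "\<forall>u\<in>W. d u = d a" using lap_zero_const[OF fW fE en gc L] aW by blast
    have "(\<Sum>v\<in>W. d v) = 0" using q ex unfolding harmP_def d_def by (simp add: sum_subtractf)
    moreover have "(\<Sum>v\<in>W. d v) = (\<Sum>v\<in>W. d a)" using da by (intro sum.cong refl) blast
    ultimately have "real (card W) * d a = 0" by simp
    hence da0: "d a = 0" using cardpos by simp
    have "\<forall>u\<in>W. d u = 0"
    proof
      fix u assume "u \<in> W"
      hence "d u = d a" using da by blast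
      thus "d u = 0" using da0 by simp
    qed
    moreover have "\<forall>u. u \<notin> W \<longrightarrow> d u = 0" using q ex unfolding harmP_def d_def by simp
    ultimately have "\<forall>u. d u = 0" by blast
    thus "q = p'" unfolding d_def by (intro ext) simp
  qed
  have "harmP W Es en1 en2 a b (THE p. harmP W Es en1 en2 a b p)"
    by (rule theI[of "harmP W Es en1 en2 a b" p', OF ex]) (rule un)
  thus ?thesis using eq by simp
qed


lemma funpow_in: "f ` D \<subseteq> D \<Longrightarrow> x \<in> D \<Longrightarrow> (f ^^ n) x \<in> D"
  by (induction n) auto

lemma inj_funpow: "inj_on f D \<Longrightarrow> f ` D \<subseteq> D \<Longrightarrow> inj_on (f ^^ n) D"
proof (induction n)
  case 0 then show ?case by simp
next
  case (Suc n)
  have "(f ^^ n) ` D \<subseteq> D" using funpow_in[OF Suc.prems(2)] by auto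
  hence "inj_on f ((f ^^ n) ` D)" using Suc.prems(1) inj_on_subset by blast
  hence "inj_on (f \<circ> (f ^^ n)) D" using comp_inj_on Suc by blast
  thus ?case by (simp add: comp_def)
qed

lemma period:
  assumes fin: "finite D" and bij: "bij_betw f D D" and x: "x \<in> D"
  shows "\<exists>n>0. (f ^^ n) x = x"
proof -
  have sub: "f ` D \<subseteq> D" and inj: "inj_on f D" using bij by (auto simp: bij_betw_def)
  define g where "g k = (f ^^ k) x" for k
  have gD: "g ` {..card D} \<subseteq> D" using funpow_in[OF sub x] g_def by auto
  have "\<not> inj_on g {..card D}"
  proof
    assume "inj_on g {..card D}"
    from card_inj_on_le[OF this gD fin] show False by simp
  qed
  then obtain i j where ij: "i \<noteq> j" "g i = g j" unfolding inj_on_def by blast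
  have "\<exists>i j. i < j \<and> g i = g j" using ij by (metis linorder_neqE_nat)
  then obtain i j where ij: "i < j" "g i = g j" by blast
  have "(f ^^ j) x = (f ^^ i) ((f ^^ (j - i)) x)"
    using ij(1) by (metis funpow_add le_add_diff_inverse less_imp_le o_apply)
  hence "(f ^^ i) ((f ^^ (j - i)) x) = (f ^^ i) x" using ij(2) g_def by simp
  moreover have "(f ^^ (j - i)) x \<in> D" using funpow_in[OF sub x] .
  ultimately have "(f ^^ (j - i)) x = x"
    using inj_funpow[OF inj sub, of i] x unfolding inj_on_def by blast
  thus ?thesis using ij(1) by (intro exI[of _ "j - i"]) simp
qed

lemma orb_eq:
  assumes fin: "finite D" and bij: "bij_betw f D D" and x: "x \<in> D" and y: "y \<in> orb f x"
  shows "orb f y = orb f x"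
proof -
  obtain k where k: "y = (f ^^ k) x" using y unfolding orb_def by auto
  obtain n where n: "n > 0" "(f ^^ n) x = x" using period[OF assms(1-3)] by blast
  have per: "(f ^^ (n * m)) x = x" for m
  proof (induction m)
    case 0 then show ?case by simp
  next
    case (Suc m)
    have "(f ^^ (n * Suc m)) x = (f ^^ n) ((f ^^ (n * m)) x)" by (simp add: funpow_add)
    then show ?case using Suc n(2) by simp
  qed
  show ?thesis
  proof
    show "orb f y \<subseteq> orb f x"
    proof
      fix z assume "z \<in> orb f y"
      then obtain i where "z = (f ^^ i) y" unfolding orb_def by auto
      hence "z = (f ^^ (i + k)) x" using k by (simp add: funpow_add)
      thus "z \<in> orb f x" unfolding orb_def by auto
    qed
    show "orb f x \<subseteq> orb f y"
    proof
      fix z assume "z \<in> orb f x"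
      then obtain i where z: "z = (f ^^ i) x" unfolding orb_def by auto
      have nk: "n * k \<ge> k" using n(1) by simp
      have "(f ^^ (i + n * k - k)) y = (f ^^ (i + n * k - k + k)) x" using k by (simp add: funpow_add)
      also have "i + n * k - k + k = i + n * k" using nk by linarith
      also have "(f ^^ (i + n * k)) x = (f ^^ i) ((f ^^ (n * k)) x)" by (simp add: funpow_add)
      also have "\<dots> = z" using per z by simp
      finally show "z \<in> orb f y" unfolding orb_def by (metis rangeI)
    qed
  qed
qed

lemma orb_self: "x \<in> orb f x"
  unfolding orb_def by (metis funpow_0 rangeI)

lemma orb_step: "finite D \<Longrightarrow> bij_betw f D D \<Longrightarrow> x \<in> D \<Longrightarrow> orb f (f x) = orb f x"
proof -
  assume a: "finite D" "bij_betw f D D" "x \<in> D"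
  have "f x = (f ^^ 1) x" by simp
  hence "f x \<in> orb f x" unfolding orb_def by (metis rangeI)
  thus ?thesis using orb_eq[OF a] by blast
qed

lemma darts_alpha: "d \<in> darts E \<Longrightarrow> alpha d \<in> darts E"
  by (auto simp: darts_def alpha_def)

lemma alpha_alpha: "alpha (alpha d) = d"
  by (simp add: alpha_def)

lemma bij_alpha: "bij_betw alpha (darts E) (darts E)"
  unfolding bij_betw_def inj_on_def
  by (auto simp: alpha_def darts_def image_iff)

lemma map_basics:
  assumes "is_map E \<sigma>"
  shows "finite (darts E)" "bij_betw \<sigma> (darts E) (darts E)" "bij_betw (facep \<sigma>) (darts E) (darts E)"
proof -
  show "finite (darts E)" using assms by (simp add: is_map_def darts_def)
  show b: "bij_betw \<sigma> (darts E) (darts E)" using assms by (simp add: is_map_def)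
  show "bij_betw (facep \<sigma>) (darts E) (darts E)"
    unfolding facep_def by (rule bij_betw_trans[OF bij_alpha b])
qed

lemma bdry_delta:
  assumes m: "is_map E \<sigma>"
  shows "(\<Sum>e\<in>E. bdry E \<sigma> F e * deltav E \<sigma> w e) = 0"
proof -
  note mb = map_basics[OF m]
  let ?D = "darts E"
  let ?phi = "facep \<sigma>"
  define h where "h d = (if orb ?phi d = F then 1 else 0) * (if orb \<sigma> d = w then 1 else (0::real))" for d
  define g where "g d = (if orb ?phi d = F then 1 else 0) *
     ((if orb \<sigma> (alpha d) = w then 1 else 0) - (if orb \<sigma> d = w then 1 else (0::real)))" for d
  have "(\<Sum>e\<in>E. bdry E \<sigma> F e * deltav E \<sigma> w e) = (\<Sum>e\<in>E. g (e, True) + g (e, False))"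
    by (intro sum.cong refl)
       (auto simp: g_def bdry_def deltav_def rshore_def lshore_def headv_def tailv_def alpha_def)
  also have "\<dots> = (\<Sum>e\<in>E. \<Sum>s\<in>UNIV. g (e, s))" by (simp add: UNIV_bool add.commute)
  also have "\<dots> = (\<Sum>d\<in>?D. g d)" unfolding darts_def by (simp add: sum.cartesian_product)
  also have "\<dots> = (\<Sum>d\<in>?D. h (?phi d) - h d)"
  proof (intro sum.cong refl)
    fix d assume d: "d \<in> ?D"
    have "orb \<sigma> (?phi d) = orb \<sigma> (alpha d)"
      unfolding facep_def using orb_step[OF mb(1,2) darts_alpha[OF d]] by simp
    moreover have "orb ?phi (?phi d) = orb ?phi d" using orb_step[OF mb(1,3) d] .
    ultimately show "g d = h (?phi d) - h d" unfolding g_def h_def by (simp add: algebra_simps)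
  qed
  also have "\<dots> = (\<Sum>d\<in>?D. h (?phi d)) - (\<Sum>d\<in>?D. h d)" by (simp add: sum_subtractf)
  also have "(\<Sum>d\<in>?D. h (?phi d)) = (\<Sum>d\<in>?D. h d)"
    using sum.reindex_bij_betw[OF mb(3), of h] by simp
  finally show ?thesis by simp
qed

definition Trel :: "('e \<times> bool \<Rightarrow> 'e \<times> bool) \<Rightarrow> (('e \<times> bool) \<times> ('e \<times> bool)) set" where
  "Trel \<sigma> = {(x, \<sigma> x) | x. True} \<union> {(x, alpha x) | x. True}"

lemma vert_conn:
  assumes m: "is_map E \<sigma>" and dd: "(d, d') \<in> (Trel \<sigma>)\<^sup>*" and d: "d \<in> darts E"
  shows "d' \<in> darts E \<and> (orb \<sigma> d, orb \<sigma> d') \<in>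
     ({(tailv \<sigma> e, headv \<sigma> e) | e. e \<in> E} \<union> {(headv \<sigma> e, tailv \<sigma> e) | e. e \<in> E})\<^sup>*"
  using dd
proof (induction rule: rtrancl_induct)
  case base then show ?case using d by simp
next
  case (step y z)
  note mb = map_basics[OF m]
  have yD: "y \<in> darts E" using step by blast
  from step(2) consider "z = \<sigma> y" | "z = alpha y" unfolding Trel_def by blast
  then show ?case
  proof cases
    case 1
    have zD: "z \<in> darts E" using 1 bij_betw_apply[OF mb(2) yD] by simp
    have "orb \<sigma> z = orb \<sigma> y" using 1 orb_step[OF mb(1,2) yD] by simp
    then show ?thesis using step(3) zD by simp
  next
    case 2
    obtain e s where ys: "y = (e, s)" by force
    have eE: "e \<in> E" using yD ys by (simp add: darts_def)
    have edge: "(orb \<sigma> y, orb \<sigma> z) \<in> {(tailv \<sigma> e, headv \<sigma> e) | e. e \<in> E} \<union> {(headv \<sigma> e, tailv \<sigma> e) | e. e \<in> E}"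
      using 2 ys eE by (cases s) (auto simp: alpha_def tailv_def headv_def)
    have "(orb \<sigma> d, orb \<sigma> z) \<in> ({(tailv \<sigma> e, headv \<sigma> e) | e. e \<in> E} \<union> {(headv \<sigma> e, tailv \<sigma> e) | e. e \<in> E})\<^sup>*"
      by (rule rtrancl_into_rtrancl[OF conjunct2[OF step(3)] edge])
    then show ?thesis using 2 darts_alpha[OF yD] by simp
  qed
qed

lemma face_conn:
  assumes m: "is_map E \<sigma>" and dd: "(d, d') \<in> (Trel \<sigma>)\<^sup>*" and d: "d \<in> darts E"
  shows "d' \<in> darts E \<and> (orb (facep \<sigma>) d, orb (facep \<sigma>) d') \<in>
     ({(lshore \<sigma> e, rshore \<sigma> e) | e. e \<in> E} \<union> {(rshore \<sigma> e, lshore \<sigma> e) | e. e \<in> E})\<^sup>*"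
  using dd
proof (induction rule: rtrancl_induct)
  case base then show ?case using d by simp
next
  case (step y z)
  note mb = map_basics[OF m]
  let ?R = "{(lshore \<sigma> e, rshore \<sigma> e) | e. e \<in> E} \<union> {(rshore \<sigma> e, lshore \<sigma> e) | e. e \<in> E}"
  have yD: "y \<in> darts E" using step by blast
  obtain e s where ys: "y = (e, s)" by force
  have eE: "e \<in> E" using yD ys by (simp add: darts_def)
  have edge: "(orb (facep \<sigma>) y, orb (facep \<sigma>) (alpha y)) \<in> ?R"
    using ys eE by (cases s) (auto simp: alpha_def rshore_def lshore_def)
  from step(2) consider "z = \<sigma> y" | "z = alpha y" unfolding Trel_def by blast
  then show ?case
  proof cases
    case 1
    have "z = facep \<sigma> (alpha y)" using 1 by (simp add: facep_def alpha_alpha)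
    hence "orb (facep \<sigma>) z = orb (facep \<sigma>) (alpha y)"
      using orb_step[OF mb(1,3) darts_alpha[OF yD]] by simp
    moreover have "z \<in> darts E" using 1 bij_betw_apply[OF mb(2) yD] by simp
    moreover have "(orb (facep \<sigma>) d, orb (facep \<sigma>) (alpha y)) \<in> ?R\<^sup>*"
      by (rule rtrancl_into_rtrancl[OF conjunct2[OF step(3)] edge])
    ultimately show ?thesis by simp
  next
    case 2
    have "(orb (facep \<sigma>) d, orb (facep \<sigma>) (alpha y)) \<in> ?R\<^sup>*"
      by (rule rtrancl_into_rtrancl[OF conjunct2[OF step(3)] edge])
    then show ?thesis using 2 darts_alpha[OF yD] by simp
  qed
qed


lemma map_fin:
  assumes m: "is_map E \<sigma>"
  shows "finite E" "finite (verts E \<sigma>)" "finite (faces E \<sigma>)"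
  using m map_basics(1)[OF m] by (auto simp: is_map_def verts_def faces_def)

lemma ends_map:
  assumes "e \<in> E"
  shows "tailv \<sigma> e \<in> verts E \<sigma>" "headv \<sigma> e \<in> verts E \<sigma>"
        "lshore \<sigma> e \<in> faces E \<sigma>" "rshore \<sigma> e \<in> faces E \<sigma>"
  using assms by (auto simp: tailv_def headv_def lshore_def rshore_def verts_def faces_def darts_def)

lemma pie_spec:
  assumes m: "is_map E \<sigma>" and bE: "b \<in> E"
  shows "harmP (verts E \<sigma>) E (tailv \<sigma>) (headv \<sigma>) (tailv \<sigma> b) (headv \<sigma> b) (pie E \<sigma> b)"
proof -
  have f1: "finite (verts E \<sigma>)" using map_fin[OF m] by simp
  have f2: "finite E" using map_fin[OF m] by simp
  have en: "endsin (verts E \<sigma>) E (tailv \<sigma>) (headv \<sigma>)" unfolding endsin_def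
  proof
    fix e assume e: "e \<in> E"
    show "tailv \<sigma> e \<in> verts E \<sigma> \<and> headv \<sigma> e \<in> verts E \<sigma>"
      by (intro conjI ends_map(1)[OF e] ends_map(2)[OF e])
  qed
  have a: "tailv \<sigma> b \<in> verts E \<sigma>" by (rule ends_map(1)[OF bE])
  have b: "headv \<sigma> b \<in> verts E \<sigma>" by (rule ends_map(2)[OF bE])
  have gc: "gconn (verts E \<sigma>) E (tailv \<sigma>) (headv \<sigma>)"
    unfolding gconn_def
  proof (intro ballI)
    fix u v assume "u \<in> verts E \<sigma>" "v \<in> verts E \<sigma>"
    then obtain d d' where d: "d \<in> darts E" "u = orb \<sigma> d" and d': "d' \<in> darts E" "v = orb \<sigma> d'"
      unfolding verts_def by auto
    have all: "\<forall>d\<in>darts E. \<forall>d'\<in>darts E. (d, d') \<in> (Trel \<sigma>)\<^sup>*"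
      using m unfolding is_map_def Trel_def by (elim conjE) assumption
    have "(d, d') \<in> (Trel \<sigma>)\<^sup>*" by (rule bspec[OF bspec[OF all d(1)] d'(1)])
    from vert_conn[OF m this d(1)] d d'
    show "(u, v) \<in> ({(tailv \<sigma> e, headv \<sigma> e) | e. e \<in> E} \<union> {(headv \<sigma> e, tailv \<sigma> e) | e. e \<in> E})\<^sup>*"
      by simp
  qed
  show ?thesis unfolding pie_def by (rule harm_spec[OF f1 f2 en gc a b])
qed

lemma piestar_spec:
  assumes m: "is_map E \<sigma>" and bE: "b \<in> E"
  shows "harmP (faces E \<sigma>) E (lshore \<sigma>) (rshore \<sigma>) (lshore \<sigma> b) (rshore \<sigma> b) (piestar E \<sigma> b)"
proof -
  have f1: "finite (faces E \<sigma>)" using map_fin[OF m] by simp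
  have f2: "finite E" using map_fin[OF m] by simp
  have en: "endsin (faces E \<sigma>) E (lshore \<sigma>) (rshore \<sigma>)" unfolding endsin_def
  proof
    fix e assume e: "e \<in> E"
    show "lshore \<sigma> e \<in> faces E \<sigma> \<and> rshore \<sigma> e \<in> faces E \<sigma>"
      by (intro conjI ends_map(3)[OF e] ends_map(4)[OF e])
  qed
  have a: "lshore \<sigma> b \<in> faces E \<sigma>" by (rule ends_map(3)[OF bE])
  have b: "rshore \<sigma> b \<in> faces E \<sigma>" by (rule ends_map(4)[OF bE])
  have gc: "gconn (faces E \<sigma>) E (lshore \<sigma>) (rshore \<sigma>)"
    unfolding gconn_def
  proof (intro ballI)
    fix u v assume "u \<in> faces E \<sigma>" "v \<in> faces E \<sigma>"
    then obtain d d' where d: "d \<in> darts E" "u = orb (facep \<sigma>) d" and d': "d' \<in> darts E" "v = orb (facep \<sigma>) d'"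
      unfolding faces_def by auto
    have all: "\<forall>d\<in>darts E. \<forall>d'\<in>darts E. (d, d') \<in> (Trel \<sigma>)\<^sup>*"
      using m unfolding is_map_def Trel_def by (elim conjE) assumption
    have "(d, d') \<in> (Trel \<sigma>)\<^sup>*" by (rule bspec[OF bspec[OF all d(1)] d'(1)])
    from face_conn[OF m this d(1)] d d'
    show "(u, v) \<in> ({(lshore \<sigma> e, rshore \<sigma> e) | e. e \<in> E} \<union> {(rshore \<sigma> e, lshore \<sigma> e) | e. e \<in> E})\<^sup>*"
      by simp
  qed
  show ?thesis unfolding piestar_def by (rule harm_spec[OF f1 f2 en gc a b])
qed

lemma chisum:
  assumes "finite E" "b \<in> E"
  shows "(\<Sum>e\<in>E. chi b e * f e) = f b"
proof -
  have "(\<Sum>e\<in>E. chi b e * f e) = (\<Sum>e\<in>E. if e = b then f e else 0)"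
    by (intro sum.cong refl) (simp add: chi_def)
  also have "\<dots> = f b" using assms by (simp add: sum.delta')
  finally show ?thesis .
qed

lemma eta_char:
  assumes m: "is_map E \<sigma>" and bE: "b \<in> E"
  defines "x \<equiv> (\<lambda>e. if e \<in> E then chi b e + pie E \<sigma> b (headv \<sigma> e) - pie E \<sigma> b (tailv \<sigma> e)
                 + piestar E \<sigma> b (rshore \<sigma> e) - piestar E \<sigma> b (lshore \<sigma> e) else 0)"
  shows "eta E \<sigma> b = x \<and> x \<in> circs E \<sigma> \<and> (\<forall>y\<in>circs E \<sigma>. ip E (\<lambda>e. chi b e - x e) y = 0)"
proof -
  let ?V = "verts E \<sigma>" and ?F = "faces E \<sigma>"
  define P where "P = pie E \<sigma> b"
  define Q where "Q = piestar E \<sigma> b"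
  define gr where "gr e = P (headv \<sigma> e) - P (tailv \<sigma> e)" for e
  define cg where "cg e = Q (rshore \<sigma> e) - Q (lshore \<sigma> e)" for e
  note fin = map_fin[OF m]
  have hP: "\<forall>v\<in>?V. lap E (tailv \<sigma>) (headv \<sigma>) P v = (if v = headv \<sigma> b then 1 else 0) - (if v = tailv \<sigma> b then 1 else 0)"
    using pie_spec[OF m bE] unfolding harmP_def P_def by blast
  have hQ: "\<forall>F\<in>?F. lap E (lshore \<sigma>) (rshore \<sigma>) Q F = (if F = rshore \<sigma> b then 1 else 0) - (if F = lshore \<sigma> b then 1 else 0)"
    using piestar_spec[OF m bE] unfolding harmP_def Q_def by blast
  have G1: "gr e = (\<Sum>v\<in>?V. P v * deltav E \<sigma> v e)" if e: "e \<in> E" for e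
    using e sum_ind[OF fin(2) ends_map(2)[OF e] ends_map(1)[OF e], of P]
    by (simp add: deltav_def gr_def)
  have G2: "cg e = (\<Sum>F\<in>?F. Q F * bdry E \<sigma> F e)" if e: "e \<in> E" for e
    using e sum_ind[OF fin(3) ends_map(4)[OF e] ends_map(3)[OF e], of Q]
    by (simp add: bdry_def cg_def)
  have G3: "(\<Sum>e\<in>E. gr e * deltav E \<sigma> v e) = - deltav E \<sigma> v b" if v: "v \<in> ?V" for v
  proof -
    have "(\<Sum>e\<in>E. gr e * deltav E \<sigma> v e) = - lap E (tailv \<sigma>) (headv \<sigma>) P v"
      unfolding lap_def sum_negf[symmetric]
      by (intro sum.cong refl) (simp add: gr_def deltav_def algebra_simps)
    also have "\<dots> = - deltav E \<sigma> v b" using hP v bE by (auto simp: deltav_def)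
    finally show ?thesis .
  qed
  have G4: "(\<Sum>e\<in>E. cg e * bdry E \<sigma> F e) = - bdry E \<sigma> F b" if F: "F \<in> ?F" for F
  proof -
    have "(\<Sum>e\<in>E. cg e * bdry E \<sigma> F e) = - lap E (lshore \<sigma>) (rshore \<sigma>) Q F"
      unfolding lap_def sum_negf[symmetric]
      by (intro sum.cong refl) (simp add: cg_def bdry_def algebra_simps)
    also have "\<dots> = - bdry E \<sigma> F b" using hQ F bE by (auto simp: bdry_def)
    finally show ?thesis .
  qed
  have O1: "(\<Sum>e\<in>E. cg e * f e) = (\<Sum>F\<in>?F. Q F * (\<Sum>e\<in>E. bdry E \<sigma> F e * f e))" for f
  proof -
    have "(\<Sum>e\<in>E. cg e * f e) = (\<Sum>e\<in>E. (\<Sum>F\<in>?F. Q F * bdry E \<sigma> F e) * f e)"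
      by (intro sum.cong refl) (simp add: G2)
    also have "\<dots> = (\<Sum>F\<in>?F. Q F * (\<Sum>e\<in>E. bdry E \<sigma> F e * f e))"
      unfolding sum_distrib_left sum_distrib_right
      by (subst sum.swap) (simp add: mult.assoc)
    finally show ?thesis .
  qed
  have O2: "(\<Sum>e\<in>E. gr e * f e) = (\<Sum>v\<in>?V. P v * (\<Sum>e\<in>E. deltav E \<sigma> v e * f e))" for f
  proof -
    have "(\<Sum>e\<in>E. gr e * f e) = (\<Sum>e\<in>E. (\<Sum>v\<in>?V. P v * deltav E \<sigma> v e) * f e)"
      by (intro sum.cong refl) (simp add: G1)
    also have "\<dots> = (\<Sum>v\<in>?V. P v * (\<Sum>e\<in>E. deltav E \<sigma> v e * f e))"
      unfolding sum_distrib_left sum_distrib_right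
      by (subst sum.swap) (simp add: mult.assoc)
    finally show ?thesis .
  qed
  have cgd: "(\<Sum>e\<in>E. cg e * deltav E \<sigma> w e) = 0" for w
    unfolding O1 by (simp add: bdry_delta[OF m])
  have grb: "(\<Sum>e\<in>E. gr e * bdry E \<sigma> F e) = 0" for F
  proof -
    have "\<And>v. (\<Sum>e\<in>E. deltav E \<sigma> v e * bdry E \<sigma> F e) = 0"
      using bdry_delta[OF m] by (simp add: mult.commute)
    thus ?thesis unfolding O2 by simp
  qed
  have xE: "x e = chi b e + gr e + cg e" if "e \<in> E" for e
    using that by (simp add: x_def gr_def cg_def P_def Q_def)
  have xsum: "(\<Sum>e\<in>E. x e * f e) = f b + (\<Sum>e\<in>E. gr e * f e) + (\<Sum>e\<in>E. cg e * f e)" for f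
  proof -
    have "(\<Sum>e\<in>E. x e * f e) = (\<Sum>e\<in>E. chi b e * f e + gr e * f e + cg e * f e)"
      by (intro sum.cong refl) (simp add: xE algebra_simps)
    also have "\<dots> = (\<Sum>e\<in>E. chi b e * f e) + (\<Sum>e\<in>E. gr e * f e) + (\<Sum>e\<in>E. cg e * f e)"
      by (simp add: sum.distrib)
    finally show ?thesis using chisum[OF fin(1) bE] by simp
  qed
  have xc: "x \<in> circs E \<sigma>"
    unfolding circs_def
  proof (intro CollectI conjI allI impI ballI)
    show "\<And>e. e \<notin> E \<Longrightarrow> x e = 0" by (simp add: x_def)
    fix v assume "v \<in> ?V"
    thus "ip E x (deltav E \<sigma> v) = 0" unfolding ip_def xsum using G3 cgd by simp
  next
    fix F assume "F \<in> ?F"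
    thus "ip E x (bdry E \<sigma> F) = 0" unfolding ip_def xsum using G4 grb by simp
  qed
  have orth: "ip E (\<lambda>e. chi b e - x e) y = 0" if y: "y \<in> circs E \<sigma>" for y
  proof -
    have yv: "\<forall>v\<in>?V. (\<Sum>e\<in>E. deltav E \<sigma> v e * y e) = 0"
      using y unfolding circs_def ip_def by (simp add: mult.commute)
    have yf: "\<forall>F\<in>?F. (\<Sum>e\<in>E. bdry E \<sigma> F e * y e) = 0"
      using y unfolding circs_def ip_def by (simp add: mult.commute)
    have "ip E (\<lambda>e. chi b e - x e) y = - ((\<Sum>e\<in>E. gr e * y e) + (\<Sum>e\<in>E. cg e * y e))"
      unfolding ip_def sum.distrib[symmetric] sum_negf[symmetric]
      by (intro sum.cong refl) (simp add: xE algebra_simps)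
    also have "\<dots> = 0" unfolding O1 O2 using yv yf by simp
    finally show ?thesis .
  qed
  have ipd: "ip E (\<lambda>e. f e - g e) h = ip E f h - ip E g h" for f g h
    unfolding ip_def by (simp add: sum_subtractf[symmetric] algebra_simps)
  have un: "z = x" if z: "z \<in> circs E \<sigma> \<and> (\<forall>y\<in>circs E \<sigma>. ip E (\<lambda>e. chi b e - z e) y = 0)" for z
  proof -
    define d where "d e = z e - x e" for e
    have dc: "d \<in> circs E \<sigma>"
      using z xc unfolding circs_def d_def by (simp add: ipd)
    have "ip E (\<lambda>e. chi b e - x e) d - ip E (\<lambda>e. chi b e - z e) d = 0"
      using orth[OF dc] z dc by simp
    hence "ip E d d = 0"
      unfolding ip_def sum_subtractf[symmetric] by (simp add: d_def algebra_simps)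
    hence "(\<Sum>e\<in>E. (d e)^2) = 0" unfolding ip_def by (simp add: power2_eq_square)
    hence "\<forall>e\<in>E. (d e)^2 = 0" using fin(1) by (subst (asm) sum_nonneg_eq_0_iff) auto
    hence "\<forall>e\<in>E. z e = x e" unfolding d_def by simp
    moreover have "\<forall>e. e \<notin> E \<longrightarrow> z e = x e" using z xc unfolding circs_def by simp
    ultimately show "z = x" by (intro ext) (metis)
  qed
  have "eta E \<sigma> b = x" unfolding eta_def
    by (rule the_equality) (use xc orth un in blast)+
  thus ?thesis using xc orth by blast
qed

theorem mainTheorem4:
  fixes E :: "'e set" and \<sigma> :: "'e \<times> bool \<Rightarrow> 'e \<times> bool" and a b :: 'e
  assumes "is_map E \<sigma>" and "a \<in> E" and "b \<in> E"
  shows "eta E \<sigma> a b =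
    (if a = b then
       pie E \<sigma> b (headv \<sigma> a) - pie E \<sigma> b (tailv \<sigma> a)
       + piestar E \<sigma> b (rshore \<sigma> a) - piestar E \<sigma> b (lshore \<sigma> a) + 1
     else
       pie E \<sigma> b (headv \<sigma> a) - pie E \<sigma> b (tailv \<sigma> a)
       + piestar E \<sigma> b (rshore \<sigma> a) - piestar E \<sigma> b (lshore \<sigma> a))"
proof -
  note fE = map_fin(1)[OF assms(1)]
  note A = eta_char[OF assms(1) assms(2)]
  note B = eta_char[OF assms(1) assms(3)]
  define xa where "xa = eta E \<sigma> a"
  define xb where "xb = eta E \<sigma> b"
  have xac: "xa \<in> circs E \<sigma>" and xbc: "xb \<in> circs E \<sigma>" using A B xa_def xb_def by simp_all
  have oa: "ip E (\<lambda>e. chi a e - xa e) xb = 0" using A xbc xa_def by simp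
  have ob: "ip E (\<lambda>e. chi b e - xb e) xa = 0" using B xac xb_def by simp
  have "xa b = (\<Sum>e\<in>E. chi b e * xa e)" using chisum[OF fE assms(3)] by simp
  also have "\<dots> = (\<Sum>e\<in>E. xb e * xa e)"
    using ob unfolding ip_def by (simp add: left_diff_distrib sum_subtractf)
  also have "\<dots> = (\<Sum>e\<in>E. xa e * xb e)" by (simp add: mult.commute)
  also have "\<dots> = (\<Sum>e\<in>E. chi a e * xb e)"
    using oa unfolding ip_def by (simp add: left_diff_distrib sum_subtractf)
  also have "\<dots> = xb a" using chisum[OF fE assms(2)] by simp
  finally have "eta E \<sigma> a b = eta E \<sigma> b a" using xa_def xb_def by simp
  also have "\<dots> = chi b a + pie E \<sigma> b (headv \<sigma> a) - pie E \<sigma> b (tailv \<sigma> a)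
                 + piestar E \<sigma> b (rshore \<sigma> a) - piestar E \<sigma> b (lshore \<sigma> a)"
    using B assms(2) by simp
  finally show ?thesis by (simp add: chi_def)
qed

end
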